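(* (1) For every $\lambda$-term $M$, $(M^v)^\flat=M$. (2) For every $M\in\,!\Lambda^v$ and $U\in\,!\Lambda^v_{val}$ and variable $x$, $M\{U/x\}\in\,!\Lambda^v$ and $(M\{U/x\})^\flat=M^\flat\{U^\flat/x\}$. (3) For every $M\in\,!\Lambda^v$ and $T\in\,!\Lambda$, if $M\to_b T$ then $T\in\,!\Lambda^v$ and either $M^\flat=T^\flat$ or $M^\flat\to_{\beta_v}T^\flat$.
   Context: Bang calculus. The set $!\Lambda$ of terms is $T,S ::= x \mid \lambda x.T \mid T\,S \mid \mathrm{der}\,T \mid\ !T$; $\lambda$ the only binder, up to $\alpha$-conversion, $T\{S/x\}$ capture-avoiding substitution. Contexts: $C ::= [\cdot] \mid \lambda x.C \mid C\,T \mid T\,C \mid \mathrm{der}\,C \mid\ !C$. Root steps $(\lambda x.T)(!S)\mapsto_v T\{S/x\}$, $\mathrm{der}(!T)\mapsto_d T$; $\to_b$ is the closure of $\mapsto_v\cup\mapsto_d$ under contexts. $\lambda$-calculus: $M ::= V\mid MN$, values $V ::= x\mid\lambda x.M$; $\to_{\beta_v}$ is the closure of $(\lambda x.M)V\mapsto_{\beta_v}M\{V/x\}$ ($V$ a value) under $\lambda$-contexts $C ::= [\cdot]\mid\lambda x.C\mid C\,M\mid M\,C$. CbV translation: $x^v=\,!x$, $(\lambda x.M)^v=\,!(\lambda x.M^v)$, $(MN)^v=(\mathrm{der}\,M^v)\,N^v$. The subsets $!\Lambda^v$ and $!\Lambda^v_{val}$ of $!\Lambda$ are defined by mutual induction: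 $M,N ::=\ !U\mid(\mathrm{der}\,M)\,N\mid U\,M$ (elements of $!\Lambda^v$) and $U ::= x\mid\lambda x.M$ (elements of $!\Lambda^v_{val}$). The forgetful map $(\cdot)^\flat$ from $!\Lambda^v\cup\,!\Lambda^v_{val}$ to $\lambda$-terms: $(!U)^\flat=U^\flat$, $((\mathrm{der}\,M)N)^\flat=M^\flat N^\flat$, $(U\,M)^\flat=U^\flat M^\flat$, $x^\flat=x$, $(\lambda x.M)^\flat=\lambda x.M^\flat$. *)

theory Defs
  imports Main
begin

text \<open>Substitution follows the
  usual de Bruijn convention: \<open>t[s/k]\<close> replaces index k by s and
  decrements indices above k.\<close>

datatype bterm = BVar nat | BLam bterm | BApp bterm bterm | Der bterm | Bang bterm

fun blift :: "bterm \<Rightarrow> nat \<Rightarrow> bterm" where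
  "blift (BVar i) k = (if i < k then BVar i else BVar (i + 1))"
| "blift (BLam t) k = BLam (blift t (k + 1))"
| "blift (BApp t u) k = BApp (blift t k) (blift u k)"
| "blift (Der t) k = Der (blift t k)"
| "blift (Bang t) k = Bang (blift t k)"

fun bsubst :: "bterm \<Rightarrow> bterm \<Rightarrow> nat \<Rightarrow> bterm" where
  "bsubst (BVar i) s k = (if k < i then BVar (i - 1) else if i = k then s else BVar i)"
| "bsubst (BLam t) s k = BLam (bsubst t (blift s 0) (k + 1))"
| "bsubst (BApp t u) s k = BApp (bsubst t s k) (bsubst u s k)"
| "bsubst (Der t) s k = Der (bsubst t s k)"
| "bsubst (Bang t) s k = Bang (bsubst t s k)"

inductive bstep :: "bterm \<Rightarrow> bterm \<Rightarrow> bool" (infix "\<rightarrow>\<^sub>b" 50) where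
  root_v: "BApp (BLam T) (Bang S) \<rightarrow>\<^sub>b bsubst T S 0"
| root_d: "Der (Bang T) \<rightarrow>\<^sub>b T"
| lam: "T \<rightarrow>\<^sub>b T' \<Longrightarrow> BLam T \<rightarrow>\<^sub>b BLam T'"
| appL: "T \<rightarrow>\<^sub>b T' \<Longrightarrow> BApp T S \<rightarrow>\<^sub>b BApp T' S"
| appR: "S \<rightarrow>\<^sub>b S' \<Longrightarrow> BApp T S \<rightarrow>\<^sub>b BApp T S'"
| der: "T \<rightarrow>\<^sub>b T' \<Longrightarrow> Der T \<rightarrow>\<^sub>b Der T'"
| bang: "T \<rightarrow>\<^sub>b T' \<Longrightarrow> Bang T \<rightarrow>\<^sub>b Bang T'"

datatype lterm = LVar nat | LLam lterm | LApp lterm lterm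

fun llift :: "lterm \<Rightarrow> nat \<Rightarrow> lterm" where
  "llift (LVar i) k = (if i < k then LVar i else LVar (i + 1))"
| "llift (LLam t) k = LLam (llift t (k + 1))"
| "llift (LApp t u) k = LApp (llift t k) (llift u k)"

fun lsubst :: "lterm \<Rightarrow> lterm \<Rightarrow> nat \<Rightarrow> lterm" where
  "lsubst (LVar i) s k = (if k < i then LVar (i - 1) else if i = k then s else LVar i)"
| "lsubst (LLam t) s k = LLam (lsubst t (llift s 0) (k + 1))"
| "lsubst (LApp t u) s k = LApp (lsubst t s k) (lsubst u s k)"

fun is_value :: "lterm \<Rightarrow> bool" where
  "is_value (LVar _) = True"
| "is_value (LLam _) = True"
| "is_value (LApp _ _) = False"

inductive beta_v :: "lterm \<Rightarrow> lterm \<Rightarrow> bool" (infix "\<rightarrow>\<^sub>\<beta>\<^sub>v" 50) where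
  root: "is_value V \<Longrightarrow> LApp (LLam M) V \<rightarrow>\<^sub>\<beta>\<^sub>v lsubst M V 0"
| lam: "M \<rightarrow>\<^sub>\<beta>\<^sub>v M' \<Longrightarrow> LLam M \<rightarrow>\<^sub>\<beta>\<^sub>v LLam M'"
| appL: "M \<rightarrow>\<^sub>\<beta>\<^sub>v M' \<Longrightarrow> LApp M N \<rightarrow>\<^sub>\<beta>\<^sub>v LApp M' N"
| appR: "N \<rightarrow>\<^sub>\<beta>\<^sub>v N' \<Longrightarrow> LApp M N \<rightarrow>\<^sub>\<beta>\<^sub>v LApp M N'"

fun cbv :: "lterm \<Rightarrow> bterm" where
  "cbv (LVar x) = Bang (BVar x)"
| "cbv (LLam M) = Bang (BLam (cbv M))"
| "cbv (LApp M N) = BApp (Der (cbv M)) (cbv N)"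

inductive bv :: "bterm \<Rightarrow> bool" and bvval :: "bterm \<Rightarrow> bool" where
  bv_bang: "bvval U \<Longrightarrow> bv (Bang U)"
| bv_der: "bv M \<Longrightarrow> bv N \<Longrightarrow> bv (BApp (Der M) N)"
| bv_app: "bvval U \<Longrightarrow> bv M \<Longrightarrow> bv (BApp U M)"
| bvval_var: "bvval (BVar x)"
| bvval_lam: "bv M \<Longrightarrow> bvval (BLam M)"

text \<open>Forgetful map; totalised (outside the fragment the values are irrelevant).\<close>
fun flat :: "bterm \<Rightarrow> lterm" where
  "flat (BVar x) = LVar x"
| "flat (BLam M) = LLam (flat M)"
| "flat (Bang U) = flat U"
| "flat (BApp (Der M) N) = LApp (flat M) (flat N)"
| "flat (BApp U M) = LApp (flat U) (flat M)"
| "flat (Der M) = flat M"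

end

theory Submission
  imports Defs
begin

lemma flat_app_nd: "(\<And>M. A \<noteq> Der M) \<Longrightarrow> flat (BApp A B) = LApp (flat A) (flat B)"
  by (cases A) auto

lemma flat_blift: "flat (blift t k) = llift (flat t) k"
  by (induction t arbitrary: k rule: flat.induct) auto

lemma bvval_nd: "bvval U \<Longrightarrow> U \<noteq> Der M"
  by (auto elim: bvval.cases)

lemma bvval_value: "bvval U \<Longrightarrow> is_value (flat U)"
  by (auto elim: bvval.cases)

lemma bv_lift: "(bv M \<longrightarrow> (\<forall>k. bv (blift M k))) \<and> (bvval U \<longrightarrow> (\<forall>k. bvval (blift U k)))"
proof (induction rule: bv_bvval.induct)
qed (auto intro: bv_bvval.intros)

lemma bv_subst:
  "(bv M \<longrightarrow> (\<forall>S k. bvval S \<longrightarrow> bv (bsubst M S k) \<and> flat (bsubst M S k) = lsubst (flat M) (flat S) k))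
 \<and> (bvval U \<longrightarrow> (\<forall>S k. bvval S \<longrightarrow> bvval (bsubst U S k) \<and> flat (bsubst U S k) = lsubst (flat U) (flat S) k))"
proof (induction rule: bv_bvval.induct)
  case (bv_bang U)
  then show ?case by (auto intro: bv_bvval.intros)
next
  case (bv_der M N)
  then show ?case by (auto intro: bv_bvval.intros)
next
  case (bv_app U M)
  show ?case
  proof (intro allI impI)
    fix S k assume S: "bvval S"
    have u: "bvval (bsubst U S k)" "flat (bsubst U S k) = lsubst (flat U) (flat S) k"
      using bv_app S by auto
    have m: "bv (bsubst M S k)" "flat (bsubst M S k) = lsubst (flat M) (flat S) k"
      using bv_app S by auto
    show "bv (bsubst (BApp U M) S k) \<and> flat (bsubst (BApp U M) S k) = lsubst (flat (BApp U M)) (flat S) k"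
      using u m bvval_nd[OF u(1)] bvval_nd[OF bv_app(1)]
      by (auto intro: bv_bvval.intros simp: flat_app_nd)
  qed
next
  case (bvval_var x)
  then show ?case by (auto intro: bv_bvval.intros)
next
  case (bvval_lam M)
  show ?case
  proof (intro allI impI)
    fix S k assume S: "bvval S"
    have S': "bvval (blift S 0)" using bv_lift S by blast
    show "bvval (bsubst (BLam M) S k) \<and> flat (bsubst (BLam M) S k) = lsubst (flat (BLam M)) (flat S) k"
      using bvval_lam S' by (auto intro: bv_bvval.intros simp: flat_blift)
  qed
qed

inductive_cases bvAppE: "bv (BApp A B)"
inductive_cases bvBangE: "bv (Bang A)"
inductive_cases bvvalLamE: "bvval (BLam A)"

definition R where "R a b \<longleftrightarrow> (flat a = flat b \<or> flat a \<rightarrow>\<^sub>\<beta>\<^sub>v flat b)"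

lemma step_main:
  "M \<rightarrow>\<^sub>b T \<Longrightarrow> (bv M \<longrightarrow> bv T \<and> R M T) \<and> (bvval M \<longrightarrow> bvval T \<and> R M T)
    \<and> (\<forall>M1. M = Der M1 \<longrightarrow> bv M1 \<longrightarrow> ((\<exists>M1'. T = Der M1' \<and> bv M1' \<and> R M1 M1') \<or> (bvval T \<and> M1 = Bang T)))"
proof (induction rule: bstep.induct)
  case (root_v T S)
  show ?case
  proof (intro conjI impI allI)
    assume h: "bv (BApp (BLam T) (Bang S))"
    then have "bv T" "bvval S"
      by (auto elim!: bvAppE bvvalLamE bvBangE)
    then show "bv (bsubst T S 0)" "R (BApp (BLam T) (Bang S)) (bsubst T S 0)"
      using bv_subst bvval_value[of S] beta_v.root[of "flat S" "flat T"]
      by (auto simp: R_def)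
  qed (auto elim: bvval.cases)
next
  case (root_d T)
  then show ?case by (auto elim: bv.cases bvval.cases bvBangE)
next
  case (lam T T')
  then show ?case by (auto elim: bv.cases bvval.cases bvvalLamE intro: bv_bvval.intros beta_v.intros simp: R_def)
next
  case (appL T T' S)
  show ?case
  proof (intro conjI impI allI)
    assume h: "bv (BApp T S)"
    have "bv (BApp T' S) \<and> R (BApp T S) (BApp T' S)"
    proof (cases "\<exists>M. T = Der M \<and> bv M \<and> bv S")
      case True
      then obtain M where M: "T = Der M" "bv M" "bv S" by blast
      then have "(\<exists>M1'. T' = Der M1' \<and> bv M1' \<and> R M M1') \<or> (bvval T' \<and> M = Bang T')"
        using appL.IH by blast
      then show ?thesis
      proof
        assume "\<exists>M1'. T' = Der M1' \<and> bv M1' \<and> R M M1'"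
        then obtain M1' where "T' = Der M1'" "bv M1'" "R M M1'" by blast
        then show ?thesis using M by (auto intro: bv_bvval.intros beta_v.intros simp: R_def)
      next
        assume a: "bvval T' \<and> M = Bang T'"
        then show ?thesis using M bvval_nd[of T'] by (auto intro: bv_bvval.intros simp: R_def flat_app_nd)
      qed
    next
      case False
      then have "bvval T" "bv S" using h by (auto elim: bvAppE)
      then have "bvval T'" "R T T'" using appL.IH by auto
      then show ?thesis using \<open>bvval T\<close> \<open>bv S\<close> bvval_nd[of T] bvval_nd[of T']
        by (auto intro: bv_bvval.intros beta_v.intros simp: R_def flat_app_nd)
    qed
    then show "bv (BApp T' S)" "R (BApp T S) (BApp T' S)" by auto
  qed (auto elim: bvval.cases)
next
  case (appR S S' T)
  show ?case
  proof (intro conjI impI allI)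
    assume h: "bv (BApp T S)"
    then have hs: "bv S" by (auto elim: bvAppE)
    then have s: "bv S'" "R S S'" using appR.IH by auto
    have "bv (BApp T S') \<and> R (BApp T S) (BApp T S')"
    proof (cases "\<exists>M. T = Der M \<and> bv M")
      case True
      then obtain M where M: "T = Der M" "bv M" by blast
      then show ?thesis using s by (auto intro: bv_bvval.intros beta_v.intros simp: R_def)
    next
      case False
      then have "bvval T" using h by (auto elim: bvAppE)
      then show ?thesis using s bvval_nd[of T]
        by (auto intro: bv_bvval.intros beta_v.intros simp: R_def flat_app_nd)
    qed
    then show "bv (BApp T S')" "R (BApp T S) (BApp T S')" by auto
  qed (auto elim: bvval.cases)
next
  case (der T T')
  then show ?case by (auto elim: bv.cases bvval.cases simp: R_def)
next
  case (bang T T')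
  then show ?case by (auto elim: bv.cases bvval.cases bvBangE intro: bv_bvval.intros simp: R_def)
qed

theorem mainTheorem9:
  shows "(\<forall>M. flat (cbv M) = M)
    \<and> (\<forall>M U x. bv M \<longrightarrow> bvval U \<longrightarrow>
          bv (bsubst M U x) \<and> flat (bsubst M U x) = lsubst (flat M) (flat U) x)
    \<and> (\<forall>M T. bv M \<longrightarrow> M \<rightarrow>\<^sub>b T \<longrightarrow>
          bv T \<and> (flat M = flat T \<or> flat M \<rightarrow>\<^sub>\<beta>\<^sub>v flat T))"
proof (intro conjI allI impI)
  fix M show "flat (cbv M) = M" by (induction M) auto
next
  fix M U x assume "bv M" "bvval U"
  then show "bv (bsubst M U x)" "flat (bsubst M U x) = lsubst (flat M) (flat U) x"
    using bv_subst by auto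
next
  fix M T assume "bv M" "M \<rightarrow>\<^sub>b T"
  then show "bv T" "flat M = flat T \<or> flat M \<rightarrow>\<^sub>\<beta>\<^sub>v flat T"
    using step_main[of M T] by (auto simp: R_def)
qed

end
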